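(* Fix an amplification factor $\gamma \geq 1$ and a damping factor $0 \leq \rho < 1$. Let $A:\mathbb{R}^2\to\mathbb{R}^2$ be the linear map $A(u,v) = (u, u+v)$, let $\mathbf{1} = (1,1)$, $\mathbf{c} = (\gamma,1)$, $\mathbf{d} = (1,0)$, and define the piecewise affine map $T:\mathbb{R}^2\to\mathbb{R}^2$ by $$T\mathbf{x} = \begin{cases} A\mathbf{x} + \mathbf{1}, & \text{if } \langle \mathbf{c},\mathbf{x}\rangle \leq -1/2,\\ A\mathbf{x}, & \text{if } |\langle \mathbf{c},\mathbf{x}\rangle| < 1/2,\\ A\mathbf{x} - \mathbf{1}, & \text{if } \langle \mathbf{c},\mathbf{x}\rangle \geq 1/2,\end{cases}$$ and the asymmetrically-damped map $M:\mathbb{R}^2\to\mathbb{R}^2$ by $$M\mathbf{x} = \begin{cases} T(\rho\mathbf{x}), & \text{if } \langle \mathbf{d},\mathbf{x}\rangle \geq 0,\\ T\mathbf{x}, & \text{if } \langle \mathbf{d},\mathbf{x}\rangle < 0.\end{cases}$$ Then the origin is a globally attracting fixed point of $M$: $M\mathbf{0} = \mathbf{0}$, and for every $\mathbf{x}_0 \in \mathbb{R}^2$ the iterates $\mathbf{x}_n = M^n \mathbf{x}_0$ satisfy $\|\mathbf{x}_n\| \to 0$ as $n \to \infty$.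
   Context: $\langle\cdot,\cdot\rangle$ denotes the standard inner product on $\mathbb{R}^2$; points of $\mathbb{R}^2$ are written $\mathbf{x} = (u,v)$. *)

theory Defs
  imports "HOL-Analysis.Analysis"
begin

definition linA :: "real \<times> real \<Rightarrow> real \<times> real" where
  "linA x = (fst x, fst x + snd x)"

definition mapT :: "real \<Rightarrow> real \<times> real \<Rightarrow> real \<times> real" where
  "mapT \<gamma> x =
     (if inner (\<gamma>, 1) x \<le> -1/2 then linA x + (1, 1)
      else if \<bar>inner (\<gamma>, 1) x\<bar> < 1/2 then linA x
      else linA x - (1, 1))"

definition mapM :: "real \<Rightarrow> real \<Rightarrow> real \<times> real \<Rightarrow> real \<times> real" where
  "mapM \<gamma> \<rho> x =
     (if inner (1, 0) x \<ge> (0::real) then mapT \<gamma> (\<rho> *\<^sub>R x) else mapT \<gamma> x)"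

end

theory Submission
  imports Defs
begin

definition kq :: "real \<Rightarrow> real" where
  "kq D = (if D \<le> -1/2 then -1 else if \<bar>D\<bar> < 1/2 then 0 else 1)"

definition GP :: "real \<Rightarrow> real \<Rightarrow> real \<Rightarrow> real" where
  "GP g u s = s + u^2/2 - (g + 1/2) * u"
definition GM :: "real \<Rightarrow> real \<Rightarrow> real \<Rightarrow> real" where
  "GM g u s = s - u^2/2 - (g + 1/2) * u"
definition VV :: "real \<Rightarrow> real \<Rightarrow> real \<Rightarrow> real" where
  "VV g u s = max (GP g u s) (- GM g u s)"
definition inI :: "real \<Rightarrow> real \<Rightarrow> real \<Rightarrow> real \<Rightarrow> bool" where
  "inI g r u s = ((0 \<le> u \<and> u < 1 \<and> - (1/2) < r * s \<and> r * s < g + 1/2) \<or>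
                   (-1 \<le> u \<and> u < 0 \<and> - g - 1/2 \<le> s \<and> s < 1/2))"

lemma kq_m1: "D \<le> -1/2 \<Longrightarrow> kq D = -1" by (simp add: kq_def)
lemma kq_0: "-1/2 < D \<Longrightarrow> D < 1/2 \<Longrightarrow> kq D = 0" by (simp add: kq_def)
lemma kq_1: "1/2 \<le> D \<Longrightarrow> kq D = 1" by (simp add: kq_def)

lemma gp_k1: "GP g (a - 1) (D + a - (g+1)*1) = GP g a D"
  by (simp add: GP_def algebra_simps power2_eq_square field_simps)
lemma gm_k1: "GM g (a - 1) (D + a - (g+1)*1) = GM g a D + 2*a - 1"
  by (simp add: GM_def algebra_simps power2_eq_square field_simps)
lemma gp_k0: "GP g (a - 0) (D + a - (g+1)*0) = GP g a D + a"
  by (simp add: GP_def algebra_simps power2_eq_square field_simps)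
lemma gm_k0: "GM g (a - 0) (D + a - (g+1)*0) = GM g a D + a"
  by (simp add: GM_def algebra_simps power2_eq_square field_simps)
lemma gp_km: "GP g (a - -1) (D + a - (g+1)*(-1)) = GP g a D + 2*a + 1"
  by (simp add: GP_def algebra_simps power2_eq_square field_simps)
lemma gm_km: "GM g (a - -1) (D + a - (g+1)*(-1)) = GM g a D"
  by (simp add: GM_def algebra_simps power2_eq_square field_simps)
lemma gpm_sum: "GP g a D + GM g a D = 2*D - (2*g+1)*a"
  by (simp add: GP_def GM_def algebra_simps)
lemma gp_scale: "GP g (r * u) (r * s) = r * GP g u s - r*(1-r)*u^2/2"
  by (simp add: GP_def algebra_simps power2_eq_square field_simps)
lemma gm_scale: "GM g (r * u) (r * s) = r * GM g u s + r*(1-r)*u^2/2"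
  by (simp add: GM_def algebra_simps power2_eq_square field_simps)
lemma VV_ge: "GP g u s \<le> VV g u s" "- GM g u s \<le> VV g u s"
  by (auto simp: VV_def)
lemma VV_nonneg: "u^2/2 \<le> VV g u s"
proof -
  have "GP g u s - GM g u s = u^2" by (simp add: GP_def GM_def)
  thus ?thesis using VV_ge[of g u s] by linarith
qed


lemma mono_und:
  assumes g: "g \<ge> 1" and u: "u < 0" and nI: "\<not> inI g r u s"
  shows "VV g (u - kq s) (s + u - (g+1) * kq s) \<le> VV g u s"
proof -
  have sum: "GP g u s + GM g u s = 2* s - (2*g+1)*u" by (rule gpm_sum)
  note V = VV_ge[of g u s]
  consider "s \<le> -1/2" | "-1/2 < s \<and> s < 1/2" | "1/2 \<le> s" by linarith
  then show ?thesis
  proof cases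
    case 1
    hence k: "kq s = -1" by (simp add: kq_m1)
    have a: "GP g (u - kq s) (s + u - (g+1) * kq s) = GP g u s + 2*u + 1"
      using gp_km[of g u s] k by simp
    have b: "GM g (u - kq s) (s + u - (g+1) * kq s) = GM g u s"
      using gm_km[of g u s] k by simp
    have "GP g u s + 2*u + 1 \<le> VV g u s"
    proof (cases "u \<le> -1/2")
      case True thus ?thesis using V by linarith
    next
      case False
      hence "s < -g - 1/2" using nI 1 u unfolding inI_def by auto
      moreover have "(2*g-1)*(-u) \<le> (2*g-1)*(1/2)"
        using False g by (intro mult_left_mono) auto
      hence "(2*g-1)*(-u) \<le> g - 1/2" by simp
      moreover have "GP g u s + 2*u + 1 + GM g u s = 2 * s + 1 + (2*g-1)*(-u)"
        using sum by (simp add: algebra_simps)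
      ultimately show ?thesis using V g by linarith
    qed
    thus ?thesis unfolding VV_def[of g "u - kq s"] a b using V by simp
  next
    case 2
    hence k: "kq s = 0" by (simp add: kq_0)
    have a: "GP g (u - kq s) (s + u - (g+1) * kq s) = GP g u s + u"
      using gp_k0[of g u s] k by simp
    have b: "GM g (u - kq s) (s + u - (g+1) * kq s) = GM g u s + u"
      using gm_k0[of g u s] k by simp
    have u1: "u < -1" using nI 2 u g unfolding inI_def by auto
    have "(2*g-1)*(-u) \<ge> 1*(-u)"
      using u1 g by (intro mult_right_mono) auto
    moreover have "GP g u s + u + GM g u s + u = 2 * s + (2*g-1)*(-u)"
        using sum by (simp add: algebra_simps)
    ultimately have "- GM g u s - u \<le> GP g u s + u" using 2 u1 by linarith
    thus ?thesis unfolding VV_def[of g "u - kq s"] a b using V u by simp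
  next
    case 3
    hence k: "kq s = 1" by (simp add: kq_1)
    have a: "GP g (u - kq s) (s + u - (g+1) * kq s) = GP g u s"
      using gp_k1[of g u s] k by simp
    have b: "GM g (u - kq s) (s + u - (g+1) * kq s) = GM g u s + 2*u - 1"
      using gm_k1[of g u s] k by simp
    have "(2*g-1)*(-u) \<ge> 0" using u g by (intro mult_nonneg_nonneg) auto
    moreover have "GP g u s + GM g u s + 2*u - 1 = 2 * s - 1 + (2*g-1)*(-u)"
        using sum by (simp add: algebra_simps)
    ultimately have "- (GM g u s + 2*u - 1) \<le> GP g u s" using 3 by linarith
    thus ?thesis unfolding VV_def[of g "u - kq s"] a b using V by simp
  qed
qed


lemma VV_nonneg0: "0 \<le> VV g u s"
  using VV_nonneg[of u g s] by (smt (verit) zero_le_power2 divide_nonneg_pos)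

lemma scale_le_VV:
  assumes "0 \<le> r" "r \<le> 1" "X \<le> VV g u s"
  shows "r * X \<le> VV g u s"
proof (cases "X \<ge> 0")
  case True
  hence "r * X \<le> 1 * X" using assms by (intro mult_right_mono) auto
  thus ?thesis using assms by simp
next
  case False
  hence "r * X \<le> 0" using assms by (simp add: mult_nonneg_nonpos)
  thus ?thesis using VV_nonneg0[of g u s] by linarith
qed

lemma damp_km:
  assumes r: "0 \<le> r" "r < 1" and g: "g \<ge> 1" and u: "u \<ge> 0" and D: "r * s \<le> -1/2"
  shows "VV g (r * u - kq (r * s)) (r * s + r * u - (g+1) * kq (r * s)) \<le> r * VV g u s"
proof -
  have k: "kq (r * s) = -1" using D by (simp add: kq_m1)
  have a: "GP g (r * u - kq (r * s)) (r * s + r * u - (g+1) * kq (r * s)) = GP g (r*u) (r * s) + 2*(r*u) + 1"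
    using gp_km[of g "r*u" "r * s"] k by simp
  have b: "GM g (r * u - kq (r * s)) (r * s + r * u - (g+1) * kq (r * s)) = GM g (r*u) (r * s)"
    using gm_km[of g "r*u" "r * s"] k by simp
  have sum: "GP g (r*u) (r * s) + GM g (r*u) (r * s) = 2*(r * s) - (2*g+1)*(r*u)" by (rule gpm_sum)
  have ru: "(2*g-1)*(r*u) \<ge> 0" using r g u by (intro mult_nonneg_nonneg) auto
  have e: "2*(r * s) - (2*g+1)*(r*u) + 2*(r*u) = 2*(r * s) - (2*g-1)*(r*u)" by (simp add: algebra_simps)
  have c1: "GP g (r*u) (r * s) + 2*(r*u) + 1 \<le> - GM g (r*u) (r * s)"
    using sum ru D e by linarith
  have sc: "- GM g (r*u) (r * s) = r * (- GM g u s) - r*(1-r)*u^2/2" using gm_scale[of g r u s] by simp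
  have nn: "r*(1-r)*u^2/2 \<ge> 0" using r by simp
  have "r * (- GM g u s) \<le> r * VV g u s" using VV_ge(2)[of g u s] r by (intro mult_left_mono) auto
  hence c2: "- GM g (r*u) (r * s) \<le> r * VV g u s" using sc nn by linarith
  show ?thesis unfolding VV_def[of g "r * u - kq (r * s)"] a b using c1 c2 by simp
qed

lemma damp_k1_contr:
  assumes r: "0 \<le> r" "r < 1" and g: "g \<ge> 1" and u: "u \<ge> 0" and D: "1/2 \<le> r * s"
    and big: "2*(r * s) - 1 - (2*g-1)*(r*u) \<ge> 0"
  shows "VV g (r * u - kq (r * s)) (r * s + r * u - (g+1) * kq (r * s)) \<le> r * VV g u s"
proof -
  have k: "kq (r * s) = 1" using D by (simp add: kq_1)
  have a: "GP g (r * u - kq (r * s)) (r * s + r * u - (g+1) * kq (r * s)) = GP g (r*u) (r * s)"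
    using gp_k1[of g "r*u" "r * s"] k by simp
  have b: "GM g (r * u - kq (r * s)) (r * s + r * u - (g+1) * kq (r * s)) = GM g (r*u) (r * s) + 2*(r*u) - 1"
    using gm_k1[of g "r*u" "r * s"] k by simp
  have sum: "GP g (r*u) (r * s) + GM g (r*u) (r * s) = 2*(r * s) - (2*g+1)*(r*u)" by (rule gpm_sum)
  have e: "2*(r * s) - (2*g+1)*(r*u) + 2*(r*u) = 2*(r * s) - (2*g-1)*(r*u)" by (simp add: algebra_simps)
  have c1: "- (GM g (r*u) (r * s) + 2*(r*u) - 1) \<le> GP g (r*u) (r * s)"
    using sum big e by linarith
  have sc: "GP g (r*u) (r * s) = r * GP g u s - r*(1-r)*u^2/2" using gp_scale[of g r u s] by simp
  have nn: "r*(1-r)*u^2/2 \<ge> 0" using r by simp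
  have "r * GP g u s \<le> r * VV g u s" using VV_ge(1)[of g u s] r by (intro mult_left_mono) auto
  hence c2: "GP g (r*u) (r * s) \<le> r * VV g u s" using sc nn by linarith
  show ?thesis unfolding VV_def[of g "r * u - kq (r * s)"] a b using c1 c2 by simp
qed


lemma damp_k0:
  assumes r: "0 \<le> r" "r < 1" and g: "g \<ge> 1" and u: "u \<ge> 1" and D: "-1/2 < r * s" "r * s < 1/2"
  shows "VV g (r * u - kq (r * s)) (r * s + r * u - (g+1) * kq (r * s)) \<le> VV g u s"
proof -
  have k: "kq (r * s) = 0" using D by (simp add: kq_0)
  have a: "GP g (r * u - kq (r * s)) (r * s + r * u - (g+1) * kq (r * s)) = GP g (r*u) (r * s) + r*u"
    using gp_k0[of g "r*u" "r * s"] k by simp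
  have b: "GM g (r * u - kq (r * s)) (r * s + r * u - (g+1) * kq (r * s)) = GM g (r*u) (r * s) + r*u"
    using gm_k0[of g "r*u" "r * s"] k by simp
  have sc: "- GM g (r*u) (r * s) = r * (- GM g u s) - r*(1-r)*u^2/2" using gm_scale[of g r u s] by simp
  have nn: "r*(1-r)*u^2/2 \<ge> 0" "r * u \<ge> 0" using r u by auto
  have "r * (- GM g u s) \<le> VV g u s" using VV_ge(2)[of g u s] r by (intro scale_le_VV) auto
  hence c2: "- (GM g (r*u) (r * s) + r*u) \<le> VV g u s" using sc nn by linarith
  define A where "A = - GM g u s - (GP g (r*u) (r * s) + r*u)"
  define B where "B = GP g u s - (GP g (r*u) (r * s) + r*u)"
  have "A \<ge> 0 \<or> B \<ge> 0"
  proof (cases "r^2 + 2*r \<ge> 1")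
    case True
    hence rpos: "r > 0" using r by (cases "r = 0") auto
    define Q1 where "Q1 = (1+r)*(r * s)"
    define Q2 where "Q2 = r*((g+1/2)*u)"
    define Q3 where "Q3 = r*((g-1/2)*(r*u))"
    define Q4 where "Q4 = r*((1-r^2)*u^2/2)"
    have id: "r * A = - Q1 + Q2 + Q3 + Q4"
      unfolding A_def Q1_def Q2_def Q3_def Q4_def GP_def GM_def
      by (simp add: field_simps power2_eq_square)
    have h1: "Q1 \<le> (1+r)*(1/2)" unfolding Q1_def using D r by (intro mult_left_mono) auto
    have "(g+1/2)*u \<ge> (3/2)*1" using g u by (intro mult_mono) auto
    hence h2: "Q2 \<ge> r*(3/2)" unfolding Q2_def using r by (intro mult_left_mono) auto
    have "(g-1/2)*(r*u) \<ge> (1/2)*(r*1)" using g u r by (intro mult_mono) auto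
    hence "(g-1/2)*(r*u) \<ge> r/2" by simp
    hence h3: "Q3 \<ge> r*(r/2)" unfolding Q3_def using r by (intro mult_left_mono) auto
    have "(1-r^2) \<ge> 0" using r by (simp add: power2_eq_square) (smt (verit) mult_le_one)
    hence h4: "Q4 \<ge> 0" unfolding Q4_def using r by simp
    have "r * A \<ge> 0" using id h1 h2 h3 h4 True by (simp add: power2_eq_square)
    hence "A \<ge> 0" using rpos by (simp add: zero_le_mult_iff)
    thus ?thesis by simp
  next
    case False
    have id: "(1-r) * A + (1+r) * B = u * ((1-r^2)*u - 2*r)"
      unfolding A_def B_def GP_def GM_def
      by (simp add: field_simps power2_eq_square)
    have r2: "1 - r^2 \<ge> 0" using r by (simp add: power2_eq_square) (smt (verit) mult_le_one)
    have "(1-r^2)*u \<ge> (1-r^2)*1" using r2 u by (intro mult_left_mono) auto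
    hence "(1-r^2)*u - 2*r \<ge> 0" using False by simp
    hence nn2: "(1-r) * A + (1+r) * B \<ge> 0" using id u by simp
    show ?thesis
    proof (rule ccontr)
      assume "\<not> (A \<ge> 0 \<or> B \<ge> 0)"
      hence "A < 0" "B < 0" by auto
      hence "(1-r) * A \<le> 0" "(1+r) * B < 0" using r
        by (auto simp: mult_nonneg_nonpos mult_pos_neg)
      thus False using nn2 by linarith
    qed
  qed
  hence c1: "GP g (r*u) (r * s) + r*u \<le> VV g u s"
    using VV_ge[of g u s] unfolding A_def B_def by linarith
  show ?thesis unfolding VV_def[of g "r * u - kq (r * s)"] a b using c1 c2 by simp
qed

lemma damp_k1_big:
  assumes r: "0 \<le> r" "r < 1" and g: "g \<ge> 1" and a1: "r * u \<ge> 1" and D: "1/2 \<le> r * s"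
    and small: "2*(r * s) < 1 + (2*g-1)*(r*u)"
  shows "VV g (r * u - kq (r * s)) (r * s + r * u - (g+1) * kq (r * s)) \<le> VV g u s"
proof -
  have k: "kq (r * s) = 1" using D by (simp add: kq_1)
  have a: "GP g (r * u - kq (r * s)) (r * s + r * u - (g+1) * kq (r * s)) = GP g (r*u) (r * s)"
    using gp_k1[of g "r*u" "r * s"] k by simp
  have b: "GM g (r * u - kq (r * s)) (r * s + r * u - (g+1) * kq (r * s)) = GM g (r*u) (r * s) + 2*(r*u) - 1"
    using gm_k1[of g "r*u" "r * s"] k by simp
  have rpos: "r > 0" using a1 r by (cases "r = 0") auto
  have upos: "u \<ge> 0" using a1 rpos by (smt (verit) mult_nonneg_nonpos)
  have sc: "GP g (r*u) (r * s) = r * GP g u s - r*(1-r)*u^2/2" using gp_scale[of g r u s] by simp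
  have nn: "r*(1-r)*u^2/2 \<ge> 0" using r by simp
  have "r * GP g u s \<le> VV g u s" using VV_ge(1)[of g u s] r by (intro scale_le_VV) auto
  hence c1: "GP g (r*u) (r * s) \<le> VV g u s" using sc nn by linarith
  define A where "A = - GM g u s + (GM g (r*u) (r * s) + 2*(r*u) - 1)"
  define P1 where "P1 = (1-r)*((1/2 + (g-1/2)*(r*u)) - r * s)"
  define P2 where "P2 = r*(1-r^2)*u^2/2"
  have id: "r * A = P1 + (1+r)*(r*u) - 1/2 + r/2 - r + P2"
    unfolding A_def P1_def P2_def GM_def
    by (simp add: field_simps power2_eq_square)
  have "(2*g-1)*(r*u) = 2*((g-1/2)*(r*u))" by (simp add: algebra_simps)
  hence "r * s \<le> 1/2 + (g-1/2)*(r*u)" using small by linarith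
  hence h1: "P1 \<ge> 0" unfolding P1_def using r by (intro mult_nonneg_nonneg) auto
  have r2: "1 - r^2 \<ge> 0" using r by (simp add: power2_eq_square) (smt (verit) mult_le_one)
  have h2: "P2 \<ge> 0" unfolding P2_def using r r2 by simp
  have "(1+r)*(r*u) \<ge> (1+r)*1" using a1 r by (intro mult_left_mono) auto
  hence h3: "(1+r)*(r*u) \<ge> 1 + r" by simp
  obtain X where X: "X = (1+r)*(r*u)" by simp
  have "r * A > 0" using id h1 h2 h3 r unfolding X[symmetric] by linarith
  hence "A > 0" using rpos by (simp add: zero_less_mult_iff)
  hence c2: "- (GM g (r*u) (r * s) + 2*(r*u) - 1) \<le> VV g u s"
    using VV_ge(2)[of g u s] unfolding A_def by linarith
  show ?thesis unfolding VV_def[of g "r * u - kq (r * s)"] a b using c1 c2 by simp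
qed


lemma mono_damp:
  assumes r: "0 \<le> r" "r < 1" and g: "g \<ge> 1" and u: "u \<ge> 0" and nI: "\<not> inI g r u s"
    and nI2: "\<not> inI g r (r * u - kq (r * s)) (r * s + r * u - (g+1) * kq (r * s))"
  shows "VV g (r * u - kq (r * s)) (r * s + r * u - (g+1) * kq (r * s)) \<le> VV g u s"
proof -
  have rV: "r * VV g u s \<le> VV g u s" using r by (intro scale_le_VV) auto
  consider "r * s \<le> -1/2" | "-1/2 < r * s \<and> r * s < 1/2" | "1/2 \<le> r * s" by linarith
  then show ?thesis
  proof cases
    case 1 thus ?thesis using damp_km[OF r g u 1] rV by linarith
  next
    case 2
    have "u \<ge> 1" using nI 2 u g unfolding inI_def by auto
    thus ?thesis using damp_k0[OF r g] 2 by auto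
  next
    case 3
    show ?thesis
    proof (cases "2*(r * s) - 1 - (2*g-1)*(r*u) \<ge> 0")
      case True thus ?thesis using damp_k1_contr[OF r g u 3] rV by linarith
    next
      case False
      show ?thesis
      proof (cases "r * u \<ge> 1")
        case True thus ?thesis using damp_k1_big[OF r g True 3] False by linarith
      next
        case F2: False
        have k: "kq (r * s) = 1" using 3 by (simp add: kq_1)
        have ru: "r * u \<ge> 0" using r u by simp
        have "g * (r * u) \<le> g * 1" using F2 g by (intro mult_left_mono) auto
        moreover have "(2*g-1)*(r*u) = 2*(g*(r*u)) - r*u" by (simp add: algebra_simps)
        ultimately have "inI g r (r * u - kq (r * s)) (r * s + r * u - (g+1) * kq (r * s))"
          unfolding inI_def k using False F2 ru 3 by (simp add: algebra_simps; linarith)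
        thus ?thesis using nI2 by simp
      qed
    qed
  qed
qed

lemma contr_lt1:
  assumes r: "0 \<le> r" "r < 1" and g: "g \<ge> 1" and u: "u \<ge> 0" "u < 1" and nI: "\<not> inI g r u s"
  shows "VV g (r * u - kq (r * s)) (r * s + r * u - (g+1) * kq (r * s)) \<le> r * VV g u s"
proof -
  consider "r * s \<le> -1/2" | "-1/2 < r * s \<and> r * s < 1/2" | "1/2 \<le> r * s" by linarith
  then show ?thesis
  proof cases
    case 1 thus ?thesis using damp_km[OF r g u(1) 1] by linarith
  next
    case 2
    hence False using nI u g unfolding inI_def by auto
    thus ?thesis ..
  next
    case 3
    hence D: "r * s \<ge> g + 1/2" using nI u unfolding inI_def by auto
    have "r * u \<le> 1 * u" using r u by (intro mult_right_mono) auto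
    hence "(2*g-1)*(r*u) \<le> (2*g-1)*1" using g u r by (intro mult_left_mono) auto
    hence "(2*g-1)*(r*u) \<le> 2*g-1" by simp
    hence "2*(r * s) - 1 - (2*g-1)*(r*u) \<ge> 0" using D by linarith
    thus ?thesis using damp_k1_contr[OF r g u(1) 3] by linarith
  qed
qed

lemma rt_upper: "0 \<le> r \<Longrightarrow> r \<le> 1 \<Longrightarrow> t < c \<Longrightarrow> 0 < c \<Longrightarrow> r * t < (c::real)"
proof (cases "t \<ge> 0")
  case True
  assume "0 \<le> r" "r \<le> 1" "t < c" "0 < c"
  hence "r * t \<le> 1 * t" using True by (intro mult_right_mono) auto
  thus ?thesis using \<open>t < c\<close> by simp
next
  case False
  assume "0 \<le> r" "r \<le> 1" "t < c" "0 < c"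
  hence "r * t \<le> 0" using False by (simp add: mult_nonneg_nonpos)
  thus ?thesis using \<open>0 < c\<close> by simp
qed

lemma rt_lower: "0 \<le> r \<Longrightarrow> r < 1 \<Longrightarrow> -1/2 \<le> t \<Longrightarrow> -1/2 < r * (t::real)"
proof -
  assume a: "0 \<le> r" "r < 1" "-1/2 \<le> t"
  hence "r * (-1/2) \<le> r * t" by (intro mult_left_mono) auto
  thus ?thesis using a by linarith
qed

lemma inv_und:
  assumes r: "0 \<le> r" "r < 1" and g: "g \<ge> 1" and u: "u < 0" and I: "inI g r u s"
  shows "inI g r (u - kq s) (s + u - (g+1) * kq s)"
proof -
  have u1: "-1 \<le> u" and s: "-g - 1/2 \<le> s" "s < 1/2" using I u unfolding inI_def by auto
  show ?thesis
  proof (cases "s \<le> -1/2")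
    case True
    hence k: "kq s = -1" by (simp add: kq_m1)
    have "-1/2 < r * (s + u + g + 1)" using rt_lower[OF r, of "s + u + g + 1"] s u1 by linarith
    moreover have "r * (s + u + g + 1) < g + 1/2" using rt_upper[of r "s + u + g + 1" "g + 1/2"] r u True g by linarith
    ultimately show ?thesis unfolding inI_def k using u u1 by (simp add: algebra_simps)
  next
    case False
    hence k: "kq s = 0" using s by (simp add: kq_0)
    show ?thesis unfolding inI_def k using u u1 s g False by simp
  qed
qed

lemma inv_damp:
  assumes r: "0 \<le> r" "r < 1" and g: "g \<ge> 1" and u: "u \<ge> 0" and I: "inI g r u s"
  shows "inI g r (r * u - kq (r * s)) (r * s + r * u - (g+1) * kq (r * s))"
proof -
  have u1: "u < 1" and D: "-1/2 < r * s" "r * s < g + 1/2" using I u unfolding inI_def by auto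
  have "r * u \<le> 1 * u" using r u by (intro mult_right_mono) auto
  hence ru: "r * u \<le> u" "0 \<le> r * u" using r u by auto
  show ?thesis
  proof (cases "r * s < 1/2")
    case True
    hence k: "kq (r * s) = 0" using D by (simp add: kq_0)
    have "-1/2 < r * (r * s + r * u)" using rt_lower[OF r, of "r * s + r * u"] D ru by linarith
    moreover have "r * (r * s + r * u) < g + 1/2" using rt_upper[of r "r * s + r * u" "g + 1/2"] r ru True g u1 by linarith
    ultimately show ?thesis unfolding inI_def k using ru u1 by simp
  next
    case False
    hence k: "kq (r * s) = 1" by (simp add: kq_1)
    show ?thesis unfolding inI_def k using ru u1 D False by simp
  qed
qed

definition pp :: "real \<Rightarrow> real" where "pp u = (if u \<ge> 0 then u else u + 1)"

lemma pp_und: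
  assumes r: "0 \<le> r" "r < 1" and u: "u < 0" and I: "inI g r u s"
  shows "pp (u - kq s) = pp u"
proof -
  have u1: "-1 \<le> u" and s: "s < 1/2" using I u unfolding inI_def by auto
  show ?thesis
  proof (cases "s \<le> -1/2")
    case True thus ?thesis using u u1 by (simp add: kq_m1 pp_def)
  next
    case False thus ?thesis using u s by (simp add: kq_0 pp_def)
  qed
qed

lemma pp_damp:
  assumes r: "0 \<le> r" "r < 1" and u: "u \<ge> 0" and I: "inI g r u s"
  shows "pp (r * u - kq (r * s)) = r * pp u"
proof -
  have u1: "u < 1" and D: "-1/2 < r * s" using I u unfolding inI_def by auto
  have "r * u \<le> 1 * u" using r u by (intro mult_right_mono) auto
  hence ru: "r * u \<le> u" "0 \<le> r * u" using r u by auto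
  show ?thesis
  proof (cases "r * s < 1/2")
    case True thus ?thesis using D ru u by (simp add: kq_0 pp_def)
  next
    case False thus ?thesis using ru u u1 by (simp add: kq_1 pp_def)
  qed
qed


lemma psi_und:
  assumes g: "g \<ge> 1" and u: "u < 0" and nI: "\<not> inI g r u s"
  shows "GM g (u - kq s) (s + u - (g+1) * kq s) - (u - kq s)/2 \<le> GM g u s - u/2 - 1/2"
proof -
  consider "s \<le> -1/2" | "-1/2 < s \<and> s < 1/2" | "1/2 \<le> s" by linarith
  then show ?thesis
  proof cases
    case 1
    hence k: "kq s = -1" by (simp add: kq_m1)
    show ?thesis using gm_km[of g u s] k by (simp add: field_simps)
  next
    case 2
    hence k: "kq s = 0" by (simp add: kq_0)
    have u1: "u < -1" using nI 2 u g unfolding inI_def by auto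
    show ?thesis using gm_k0[of g u s] k u1 by simp
  next
    case 3
    hence k: "kq s = 1" by (simp add: kq_1)
    show ?thesis using gm_k1[of g u s] k u by (simp add: field_simps)
  qed
qed

definition Phi :: "real \<Rightarrow> real \<Rightarrow> real \<Rightarrow> real \<Rightarrow> real" where
  "Phi g r u s = (if u \<ge> 0 then r * s else s + g + 3/4)"

lemma phi_lower: "inI g r u s \<Longrightarrow> -1/2 < Phi g r u s"
  unfolding inI_def Phi_def by auto

lemma phi_damp:
  assumes r: "0 \<le> r" "r < 1" and u: "u \<ge> 0" "u \<le> 1/8" and D: "1/2 \<le> r * s"
  shows "Phi g r (r * u - kq (r * s)) (r * s + r * u - (g+1) * kq (r * s)) \<le> Phi g r u s - 1/8"
proof -
  have "r * u \<le> 1 * u" using r u by (intro mult_right_mono) auto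
  hence ru: "r * u \<le> u" by simp
  have k: "kq (r * s) = 1" using D by (simp add: kq_1)
  show ?thesis unfolding Phi_def k using ru u by (simp add: algebra_simps)
qed

lemma phi_und:
  assumes r: "0 \<le> r" "r < 1" and g: "g \<ge> 1" and u: "u < 0" "u + 1 \<le> 1/8" and I: "inI g r u s"
  shows "Phi g r (u - kq s) (s + u - (g+1) * kq s) \<le> Phi g r u s - 1/8"
proof -
  have u1: "-1 \<le> u" and s: "-g - 1/2 \<le> s" "s < 1/2" using I u unfolding inI_def by auto
  show ?thesis
  proof (cases "s \<le> -1/2")
    case True
    hence k: "kq s = -1" by (simp add: kq_m1)
    have "r * (s + u + g + 1) \<le> s + g + 5/8"
    proof (cases "s + u + g + 1 \<ge> 0")
      case True
      hence "r * (s + u + g + 1) \<le> 1 * (s + u + g + 1)" using r by (intro mult_right_mono) auto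
      thus ?thesis using u by simp
    next
      case False
      hence "r * (s + u + g + 1) \<le> 0" using r by (simp add: mult_nonneg_nonpos)
      thus ?thesis using s by simp
    qed
    thus ?thesis unfolding Phi_def k using u u1 by (simp add: algebra_simps)
  next
    case False
    hence k: "kq s = 0" using s by (simp add: kq_0)
    show ?thesis unfolding Phi_def k using u by simp
  qed
qed

definition trap :: "real \<Rightarrow> real \<Rightarrow> real \<Rightarrow> bool" where
  "trap r u s \<longleftrightarrow> 0 \<le> u \<and> u \<le> (1-r)/2 \<and> -1/2 < r * s \<and> r * s < 1/2"

lemma trap_step:
  assumes r: "0 \<le> r" "r < 1" and T: "trap r u s"
  shows "kq (r * s) = 0" "trap r (r * u) (r * s + r * u)"
proof -
  have u: "0 \<le> u" "u \<le> (1-r)/2" and D: "-1/2 < r * s" "r * s < 1/2" using T unfolding trap_def by auto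
  show "kq (r * s) = 0" using D by (simp add: kq_0)
  have "r * u \<le> 1 * u" using r u by (intro mult_right_mono) auto
  hence ru: "r * u \<le> u" "0 \<le> r * u" using r u by auto
  have "-1/2 < r * (r * s + r * u)" using rt_lower[OF r, of "r * s + r * u"] D ru by linarith
  moreover have "r * (r * s + r * u) < 1/2"
  proof (cases "r * s + r * u \<le> 0")
    case True
    have "r * (r * s + r * u) \<le> 0" using r True by (simp add: mult_nonneg_nonpos)
    thus ?thesis by linarith
  next
    case False
    have "r * (r * s + r * u) \<le> r * (1 - r/2)" using r D ru u by (intro mult_left_mono) auto
    moreover have "r * (1 - r/2) < 1/2"
    proof -
      have "0 < (1-r)^2" using r by simp
      moreover have "(1-r)^2 = 1 - 2*r + r*r" by (simp add: power2_eq_square algebra_simps)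
      moreover have "r*(1-r/2) = r - r*r/2" by (simp add: algebra_simps)
      ultimately show ?thesis by linarith
    qed
    ultimately show ?thesis by linarith
  qed
  ultimately show "trap r (r * u) (r * s + r * u)" unfolding trap_def using ru u by simp
qed

definition dd :: "real \<Rightarrow> real" where "dd g = min (1/4) ((1/(4*g+2))^2/2)"

lemma small_inI:
  assumes r: "0 \<le> r" "r < 1" and g: "g \<ge> 1" and V: "VV g u s < dd g"
  shows "inI g r u s"
proof -
  define e where "e = 1/(4*g+2)"
  have epos: "e > 0" using g unfolding e_def by simp
  have ge: "(g + 1/2) * e = 1/2 * 1/2" unfolding e_def using g by (simp add: field_simps)
  have ddi: "dd g = min (1/4) (e^2/2)" by (simp only: dd_def e_def)
  have V0: "VV g u s < min (1/4) (e^2/2)" using V ddi by metis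
  have V1: "VV g u s < 1/4" "VV g u s < e^2/2" using V0 min_less_iff_conj by blast+
  have "u^2/2 < e^2/2" by (rule le_less_trans[OF VV_nonneg V1(2)])
  hence "\<bar>u\<bar>^2 < e^2" by simp
  hence ue: "\<bar>u\<bar> < e" using epos power2_less_imp_less[of "\<bar>u\<bar>" e] by linarith
  have "(g + 1/2) * \<bar>u\<bar> \<le> (g + 1/2) * e" using ue g by (intro mult_left_mono) auto
  hence gu: "(g + 1/2) * \<bar>u\<bar> \<le> 1/4" using ge by simp
  have e1: "e < 1" unfolding e_def using g by simp
  have gu2a: "(g + 1/2) * u \<le> (g + 1/2) * \<bar>u\<bar>" using g by (intro mult_left_mono) auto
  have "(g + 1/2) * (-\<bar>u\<bar>) \<le> (g + 1/2) * u" using g by (intro mult_left_mono) auto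
  hence gu2b: "-((g + 1/2) * \<bar>u\<bar>) \<le> (g + 1/2) * u" by simp
  note gu2 = gu2a gu2b
  have sq: "u^2/2 \<ge> 0" by simp
  have s1: "s < 1/2" using VV_ge(1)[of g u s] V1 gu gu2 sq unfolding GP_def by linarith
  have s2: "-1/2 < s" using VV_ge(2)[of g u s] V1 gu gu2 sq unfolding GM_def by linarith
  show ?thesis
  proof (cases "u \<ge> 0")
    case True
    have "-1/2 < r * s" using rt_lower[OF r, of s] s2 by linarith
    moreover have "r * s < 1/2" using rt_upper[of r s "1/2"] r s1 by linarith
    ultimately show ?thesis unfolding inI_def using True ue e1 g by auto
  next
    case False
    thus ?thesis unfolding inI_def using ue e1 s1 s2 g by auto
  qed
qed

lemma mapT_fst: "fst (mapT g y) = fst y - kq (g * fst y + snd y)"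
  by (cases y) (auto simp: mapT_def kq_def linA_def)

lemma mapT_snd: "snd (mapT g y) = fst y + snd y - kq (g * fst y + snd y)"
  by (cases y) (auto simp: mapT_def kq_def linA_def)

definition SS :: "real \<Rightarrow> real \<times> real \<Rightarrow> real" where "SS g x = g * fst x + snd x"

lemma mapM_und:
  assumes "fst x < 0"
  shows "fst (mapM g r x) = fst x - kq (SS g x)"
    "SS g (mapM g r x) = SS g x + fst x - (g+1) * kq (SS g x)"
proof -
  have e: "mapM g r x = mapT g x" using assms by (cases x) (simp add: mapM_def)
  show "fst (mapM g r x) = fst x - kq (SS g x)" unfolding e mapT_fst SS_def ..
  show "SS g (mapM g r x) = SS g x + fst x - (g+1) * kq (SS g x)"
    unfolding SS_def e mapT_fst mapT_snd by (simp add: algebra_simps)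
qed

lemma mapM_damp:
  assumes "fst x \<ge> 0"
  shows "fst (mapM g r x) = r * fst x - kq (r * SS g x)"
    "SS g (mapM g r x) = r * SS g x + r * fst x - (g+1) * kq (r * SS g x)"
proof -
  have e: "mapM g r x = mapT g (r *\<^sub>R x)" using assms by (cases x) (simp add: mapM_def)
  have k: "g * fst (r *\<^sub>R x) + snd (r *\<^sub>R x) = r * SS g x" by (simp add: SS_def algebra_simps)
  show "fst (mapM g r x) = r * fst x - kq (r * SS g x)" unfolding e mapT_fst k by simp
  show "SS g (mapM g r x) = r * SS g x + r * fst x - (g+1) * kq (r * SS g x)"
    unfolding e SS_def mapT_fst mapT_snd k[unfolded SS_def] by (simp add: algebra_simps)
qed

lemma trap_orbit:
  assumes r: "0 \<le> r" "r < 1" and T: "trap r (fst x) (SS g x)"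
  shows "trap r (fst ((mapM g r ^^ j) x)) (SS g ((mapM g r ^^ j) x)) \<and>
         (mapM g r ^^ j) x = (r^j * fst x, r^j * (snd x + real j * fst x))"
proof (induction j)
  case 0
  then show ?case using T by simp
next
  case (Suc j)
  define y where "y = (mapM g r ^^ j) x"
  have Ty: "trap r (fst y) (SS g y)" and ey: "y = (r^j * fst x, r^j * (snd x + real j * fst x))"
    using Suc.IH unfolding y_def by auto
  have u0: "fst y \<ge> 0" using Ty unfolding trap_def by auto
  have k: "kq (r * SS g y) = 0" using trap_step(1)[OF r Ty] .
  have e: "mapM g r y = mapT g (r *\<^sub>R y)" using u0 by (cases y) (simp add: mapM_def)
  have k2: "g * fst (r *\<^sub>R y) + snd (r *\<^sub>R y) = r * SS g y" by (simp add: SS_def algebra_simps)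
  have My: "mapM g r y = (r * fst y, r * fst y + r * snd y)"
  proof -
    have "g * (r * fst y) + r * snd y = r * SS g y" by (simp add: SS_def algebra_simps)
    hence k3: "kq (g * (r * fst y) + r * snd y) = 0" using k by simp
    show ?thesis unfolding e by (rule prod_eqI) (simp_all add: mapT_fst mapT_snd k3)
  qed
  have "trap r (fst (mapM g r y)) (SS g (mapM g r y))"
    using trap_step(2)[OF r Ty] unfolding mapM_damp[OF u0] k by simp
  moreover have "mapM g r y = (r^Suc j * fst x, r^Suc j * (snd x + real (Suc j) * fst x))"
  proof -
    have fy: "fst y = r^j * fst x" and sy: "snd y = r^j * (snd x + real j * fst x)" using ey by auto
    show ?thesis unfolding My fy sy by (simp add: algebra_simps)
  qed
  ultimately show ?case unfolding y_def by simp
qed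

lemma trap_conv:
  assumes r: "0 \<le> r" "r < 1" and T: "trap r (fst x) (SS g x)"
  shows "(\<lambda>n. norm ((mapM g r ^^ n) x)) \<longlonglongrightarrow> 0"
proof -
  have e: "(mapM g r ^^ n) x = (r^n * fst x, r^n * snd x + (real n * r^n) * fst x)" for n
    using trap_orbit[OF r T, of n] by (simp add: algebra_simps)
  have p0: "(\<lambda>n. r^n) \<longlonglongrightarrow> 0" using r by (intro LIMSEQ_power_zero) simp
  have p1: "(\<lambda>n. real n * r^n) \<longlonglongrightarrow> 0" using r powser_times_n_limit_0[of r] by simp
  have "(\<lambda>n. (r^n * fst x, r^n * snd x + (real n * r^n) * fst x)) \<longlonglongrightarrow> (0 * fst x, 0 * snd x + 0 * fst x)"
    by (intro tendsto_intros p0 p1)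
  hence "(\<lambda>n. (mapM g r ^^ n) x) \<longlonglongrightarrow> 0" unfolding e by (simp add: zero_prod_def)
  thus ?thesis by (rule tendsto_norm_zero)
qed

lemma stepI:
  assumes r: "0 \<le> r" "r < 1" and g: "g \<ge> 1" and I: "inI g r (fst x) (SS g x)"
  shows "inI g r (fst (mapM g r x)) (SS g (mapM g r x))"
proof (cases "fst x < 0")
  case True thus ?thesis using inv_und[OF r g True I] mapM_und[OF True] by simp
next
  case False
  hence u: "fst x \<ge> 0" by simp
  thus ?thesis using inv_damp[OF r g u I] mapM_damp[OF u] by simp
qed

lemma stepP:
  assumes r: "0 \<le> r" "r < 1" and I: "inI g r (fst x) (SS g x)"
  shows "pp (fst (mapM g r x)) = (if fst x \<ge> 0 then r else 1) * pp (fst x)"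
proof (cases "fst x < 0")
  case True thus ?thesis using pp_und[OF r True I] mapM_und[OF True] by simp
next
  case False
  hence u: "fst x \<ge> 0" by simp
  thus ?thesis using pp_damp[OF r u I] mapM_damp[OF u] by simp
qed

lemma pp_bounds: "inI g r u s \<Longrightarrow> 0 \<le> pp u \<and> pp u < 1"
  unfolding inI_def pp_def by auto

lemma conv_from_I:
  assumes r: "0 \<le> r" "r < 1" and g: "g \<ge> 1" and I0: "inI g r (fst x) (SS g x)"
  shows "(\<lambda>n. norm ((mapM g r ^^ n) x)) \<longlonglongrightarrow> 0"
proof -
  define X where "X n = (mapM g r ^^ n) x" for n
  have XS: "X (Suc n) = mapM g r (X n)" for n by (simp add: X_def)
  have XA: "X (j + n) = (mapM g r ^^ j) (X n)" for n j by (simp add: X_def funpow_add)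
  have I: "inI g r (fst (X n)) (SS g (X n))" for n
    by (induction n) (use I0 stepI[OF r g] XS X_def in auto)
  have Pm: "pp (fst (X (Suc n))) \<le> pp (fst (X n))" for n
  proof -
    have b: "0 \<le> pp (fst (X n))" using pp_bounds[OF I[of n]] by simp
    have "(if fst (X n) \<ge> 0 then r else 1) * pp (fst (X n)) \<le> 1 * pp (fst (X n))"
      using r b by (intro mult_right_mono) auto
    thus ?thesis unfolding XS stepP[OF r I[of n]] by simp
  qed
  have Pm2: "pp (fst (X n)) \<le> pp (fst (X m))" if "m \<le> n" for m n
    using that
  proof (induction rule: dec_induct)
    case base then show ?case by simp
  next
    case (step k) then show ?case using Pm[of k] by linarith
  qed
  have run: "\<exists>j. fst (X (n + j)) \<ge> 0" for n
  proof (cases "fst (X n) \<ge> 0")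
    case True then show ?thesis by (intro exI[of _ 0]) simp
  next
    case False
    define u where "u = fst (X n)"
    have un: "u < 0" using False unfolding u_def by simp
    have claim: "\<forall>m. fst (X m) = u \<longrightarrow> SS g (X m) < -g - 1/2 + real k * (-u) \<longrightarrow> (\<exists>j. fst (X (m + j)) \<ge> 0)" for k
    proof (induction k)
      case 0
      show ?case
      proof (intro allI impI)
        fix m assume um: "fst (X m) = u" and sm: "SS g (X m) < -g - 1/2 + real 0 * (-u)"
        have "-g - 1/2 \<le> SS g (X m)" using I[of m] um un unfolding inI_def by auto
        thus "\<exists>j. fst (X (m + j)) \<ge> 0" using sm by simp
      qed
    next
      case (Suc k)
      show ?case
      proof (intro allI impI)
        fix m assume um: "fst (X m) = u" and sm: "SS g (X m) < -g - 1/2 + real (Suc k) * (-u)"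
        have Im: "-1 \<le> u" "SS g (X m) < 1/2" using I[of m] um un unfolding inI_def by auto
        have neg: "fst (X m) < 0" using um un by simp
        show "\<exists>j. fst (X (m + j)) \<ge> 0"
        proof (cases "SS g (X m) \<le> -1/2")
          case True
          hence "fst (X (Suc m)) = u + 1" unfolding XS mapM_und(1)[OF neg] um by (simp add: kq_m1)
          hence "fst (X (m + 1)) \<ge> 0" using Im by simp
          thus ?thesis by blast
        next
          case False
          hence k0: "kq (SS g (X m)) = 0" using Im by (simp add: kq_0)
          have f1: "fst (X (Suc m)) = u" unfolding XS mapM_und(1)[OF neg] um k0 by simp
          have f2: "SS g (X (Suc m)) = SS g (X m) + u" unfolding XS mapM_und(2)[OF neg] um k0 by simp
          have "real (Suc k) * (-u) = real k * (-u) + (-u)" by (simp add: algebra_simps)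
          hence "SS g (X (Suc m)) < -g - 1/2 + real k * (-u)" using f2 sm by linarith
          then obtain j where "fst (X (Suc m + j)) \<ge> 0"
            using Suc.IH f1 by blast
          hence "fst (X (m + Suc j)) \<ge> 0" by simp
          thus ?thesis by blast
        qed
      qed
    qed
    obtain k where "SS g (X n) + g + 1/2 < real k * (-u)" using ex_less_of_nat_mult[of "-u"] un by auto
    thus ?thesis using claim[of k] unfolding u_def by auto
  qed
  have pw: "\<exists>n. pp (fst (X n)) \<le> r^m" for m
  proof (induction m)
    case 0
    show ?case using pp_bounds[OF I[of 0]] by (intro exI[of _ 0]) simp
  next
    case (Suc m)
    then obtain n where n: "pp (fst (X n)) \<le> r^m" by blast
    obtain j where j: "fst (X (n + j)) \<ge> 0" using run by blast
    have "pp (fst (X (n + j))) \<le> pp (fst (X n))" by (rule Pm2) simp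
    hence "r * pp (fst (X (n + j))) \<le> r * r^m" using n r by (intro mult_left_mono) auto
    hence "pp (fst (X (Suc (n + j)))) \<le> r^Suc m" unfolding XS stepP[OF r I[of "n+j"]] using j by simp
    thus ?case by blast
  qed
  define th where "th = min (1/8) ((1-r)/2)"
  have thpos: "th > 0" using r unfolding th_def by simp
  obtain m where m: "r^m < th" using real_arch_pow_inv[OF thpos r(2)] by blast
  obtain n0 where "pp (fst (X n0)) \<le> r^m" using pw[of m] by blast
  hence n0: "pp (fst (X n0)) \<le> th" using m by linarith
  have Pth: "pp (fst (X n)) \<le> th" if "n0 \<le> n" for n using Pm2[OF that] n0 by linarith
  have endg: "\<forall>n. n0 \<le> n \<longrightarrow> Phi g r (fst (X n)) (SS g (X n)) < -1/2 + real k / 8 \<longrightarrow>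
      (\<exists>n'. trap r (fst (X n')) (SS g (X n')))" for k
  proof (induction k)
    case 0
    show ?case
    proof (intro allI impI)
      fix n assume "n0 \<le> n" and ph: "Phi g r (fst (X n)) (SS g (X n)) < -1/2 + real 0 / 8"
      thus "\<exists>n'. trap r (fst (X n')) (SS g (X n'))" using phi_lower[OF I[of n]] by simp
    qed
  next
    case (Suc k)
    show ?case
    proof (intro allI impI)
      fix n assume nn: "n0 \<le> n" and ph: "Phi g r (fst (X n)) (SS g (X n)) < -1/2 + real (Suc k) / 8"
      show "\<exists>n'. trap r (fst (X n')) (SS g (X n'))"
      proof (cases "trap r (fst (X n)) (SS g (X n))")
        case True thus ?thesis by blast
      next
        case NT: False
        have pth: "pp (fst (X n)) \<le> th" using Pth[OF nn] .
        have th1: "th \<le> 1/8" "th \<le> (1-r)/2" unfolding th_def by (rule min.cobounded1, rule min.cobounded2)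
        have "Phi g r (fst (X (Suc n))) (SS g (X (Suc n))) \<le> Phi g r (fst (X n)) (SS g (X n)) - 1/8"
        proof (cases "fst (X n) \<ge> 0")
          case True
          have u: "fst (X n) \<le> 1/8" "fst (X n) \<le> (1-r)/2" using pth th1 True unfolding pp_def by auto
          have "-1/2 < r * SS g (X n)" using I[of n] True unfolding inI_def by auto
          hence D: "1/2 \<le> r * SS g (X n)" using NT True u unfolding trap_def by auto
          show ?thesis unfolding XS mapM_damp[OF True] using phi_damp[OF r True u(1) D] by simp
        next
          case False
          hence neg: "fst (X n) < 0" by simp
          have u: "fst (X n) + 1 \<le> 1/8" using pth th1 neg unfolding pp_def by auto
          show ?thesis unfolding XS mapM_und[OF neg] using phi_und[OF r g neg u I[of n]] by simp
        qed
        moreover have "real (Suc k) / 8 = real k / 8 + 1/8" by (simp add: field_simps)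
        ultimately have "Phi g r (fst (X (Suc n))) (SS g (X (Suc n))) < -1/2 + real k / 8" using ph by linarith
        moreover have "n0 \<le> Suc n" using nn by simp
        ultimately show ?thesis using Suc.IH by blast
      qed
    qed
  qed
  have "\<exists>k. Phi g r (fst (X n0)) (SS g (X n0)) + 1/2 < real k * (1/8)"
    by (rule ex_less_of_nat_mult) simp
  then obtain k where k: "Phi g r (fst (X n0)) (SS g (X n0)) + 1/2 < real k * (1/8)" by blast
  have "real k * (1/8) = real k / 8" by simp
  hence "Phi g r (fst (X n0)) (SS g (X n0)) < -1/2 + real k / 8" using k by linarith
  then obtain n' where T: "trap r (fst (X n')) (SS g (X n'))" using endg[of k] by blast
  have "(\<lambda>j. norm ((mapM g r ^^ j) (X n'))) \<longlonglongrightarrow> 0" by (rule trap_conv[OF r T])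
  hence "(\<lambda>j. norm (X (j + n'))) \<longlonglongrightarrow> 0" unfolding XA .
  hence "(\<lambda>j. norm (X j)) \<longlonglongrightarrow> 0" by (rule LIMSEQ_offset)
  thus ?thesis unfolding X_def .
qed

lemma kq_nonneg: "-1/2 < D \<Longrightarrow> kq D \<ge> 0" by (simp add: kq_def)

lemma enter_I:
  assumes r: "0 \<le> r" "r < 1" and g: "g \<ge> 1"
  shows "\<exists>n. inI g r (fst ((mapM g r ^^ n) x)) (SS g ((mapM g r ^^ n) x))"
proof (rule ccontr)
  assume A: "\<not> (\<exists>n. inI g r (fst ((mapM g r ^^ n) x)) (SS g ((mapM g r ^^ n) x)))"
  define X where "X n = (mapM g r ^^ n) x" for n
  have nI: "\<not> inI g r (fst (X n)) (SS g (X n))" for n using A unfolding X_def by blast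
  have XS: "X (Suc n) = mapM g r (X n)" for n by (simp add: X_def)
  define Vn where "Vn n = VV g (fst (X n)) (SS g (X n))" for n
  have Vmono: "Vn (Suc n) \<le> Vn n" for n
  proof (cases "fst (X n) < 0")
    case True
    show ?thesis unfolding Vn_def XS mapM_und[OF True] using mono_und[OF g True nI] .
  next
    case False
    hence u: "fst (X n) \<ge> 0" by simp
    have n2: "\<not> inI g r (r * fst (X n) - kq (r * SS g (X n)))
        (r * SS g (X n) + r * fst (X n) - (g+1) * kq (r * SS g (X n)))"
      using nI[of "Suc n"] unfolding XS mapM_damp[OF u] .
    show ?thesis unfolding Vn_def XS mapM_damp[OF u] using mono_damp[OF r g u nI n2] .
  qed
  have Vmono2: "Vn n \<le> Vn m" if "m \<le> n" for m n
    using that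
  proof (induction rule: dec_induct)
    case base then show ?case by simp
  next
    case (step k) then show ?case using Vmono[of k] by linarith
  qed
  have V0: "Vn n \<ge> 0" for n unfolding Vn_def by (rule VV_nonneg0)
  have ddpos: "dd g > 0" unfolding dd_def using g by simp
  have notsmall: "\<not> Vn n < dd g" for n using small_inI[OF r g] nI unfolding Vn_def by blast
  define C where "C n \<longleftrightarrow> fst (X n) \<ge> 0 \<and> (r * SS g (X n) \<le> -1/2 \<or> fst (X n) < 1)" for n
  have contr: "Vn (Suc n) \<le> r * Vn n" if "C n" for n
  proof -
    have u: "fst (X n) \<ge> 0" using that unfolding C_def by simp
    show ?thesis
    proof (cases "r * SS g (X n) \<le> -1/2")
      case True
      show ?thesis unfolding Vn_def XS mapM_damp[OF u] using damp_km[OF r g u True] .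
    next
      case False
      hence "fst (X n) < 1" using that unfolding C_def by simp
      thus ?thesis unfolding Vn_def XS mapM_damp[OF u] using contr_lt1[OF r g u _ nI] by blast
    qed
  qed
  show False
  proof (cases "\<forall>N. \<exists>n\<ge>N. C n")
    case True
    have pw: "\<exists>n. Vn n \<le> r^m * Vn 0" for m
    proof (induction m)
      case 0 show ?case by (intro exI[of _ 0]) simp
    next
      case (Suc m)
      then obtain n where n: "Vn n \<le> r^m * Vn 0" by blast
      obtain n' where n': "n' \<ge> n" "C n'" using True by blast
      have "Vn n' \<le> Vn n" by (rule Vmono2[OF n'(1)])
      hence "r * Vn n' \<le> r * (r^m * Vn 0)" using n r by (intro mult_left_mono) auto
      hence "Vn (Suc n') \<le> r^Suc m * Vn 0" using contr[OF n'(2)] by (simp add: algebra_simps)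
      thus ?case by blast
    qed
    have "dd g / (Vn 0 + 1) > 0" using ddpos V0[of 0] by simp
    then obtain m where m: "r^m < dd g / (Vn 0 + 1)" using real_arch_pow_inv[OF _ r(2)] by blast
    have "r^m * (Vn 0 + 1) < dd g" using m V0[of 0] by (simp add: pos_less_divide_eq)
    moreover have "r^m * Vn 0 \<le> r^m * (Vn 0 + 1)" using r by (intro mult_left_mono) auto
    moreover obtain n where "Vn n \<le> r^m * Vn 0" using pw by blast
    ultimately have "Vn n < dd g" by linarith
    thus False using notsmall by blast
  next
    case False
    then obtain N where N: "\<And>n. n \<ge> N \<Longrightarrow> \<not> C n" by blast
    have b1: "\<exists>m\<ge>N. fst (X m) < 0"
    proof (rule ccontr)
      assume "\<not> (\<exists>m\<ge>N. fst (X m) < 0)"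
      hence pos: "fst (X n) \<ge> 0" if "n \<ge> N" for n using that by (meson not_less)
      have big: "fst (X n) \<ge> 1 \<and> -1/2 < r * SS g (X n)" if "n \<ge> N" for n
        using N[OF that] pos[OF that] unfolding C_def by auto
      have dec: "fst (X (Suc n)) \<le> r * fst (X n)" if "n \<ge> N" for n
      proof -
        have "kq (r * SS g (X n)) \<ge> 0" using big[OF that] by (intro kq_nonneg) simp
        thus ?thesis unfolding XS mapM_damp[OF pos[OF that]] by simp
      qed
      have geo: "fst (X (N + j)) \<le> r^j * fst (X N)" for j
      proof (induction j)
        case 0 show ?case by simp
      next
        case (Suc j)
        have "fst (X (Suc (N + j))) \<le> r * fst (X (N + j))" by (rule dec) simp
        also have "\<dots> \<le> r * (r^j * fst (X N))" using Suc.IH r by (intro mult_left_mono) auto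
        finally show ?case by (simp add: algebra_simps)
      qed
      have uN: "fst (X N) \<ge> 1" using big[of N] by simp
      have "1 / fst (X N) > 0" using uN by simp
      then obtain j where j: "r^j < 1 / fst (X N)" using real_arch_pow_inv[OF _ r(2)] by blast
      have "r^j * fst (X N) < 1" using j uN by (simp add: pos_less_divide_eq)
      moreover have "fst (X (N + j)) \<ge> 1" using big[of "N + j"] by simp
      ultimately show False using geo[of j] by linarith
    qed
    then obtain m where m: "m \<ge> N" "fst (X m) < 0" by blast
    have neg: "fst (X (m + j)) < 0" for j
    proof (induction j)
      case 0 show ?case using m by simp
    next
      case (Suc j)
      define n where "n = m + j"
      have nN: "Suc n \<ge> N" "n \<ge> N" using m unfolding n_def by auto
      have un: "fst (X n) < 0" using Suc.IH unfolding n_def .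
      have e: "fst (X (Suc n)) = fst (X n) - kq (SS g (X n))" unfolding XS mapM_und(1)[OF un] ..
      show ?case
      proof (cases "SS g (X n) \<le> -1/2")
        case True
        hence e2: "fst (X (Suc n)) = fst (X n) + 1" using e by (simp add: kq_m1)
        show ?thesis
        proof (rule ccontr)
          assume "\<not> fst (X (m + Suc j)) < 0"
          hence p: "fst (X (Suc n)) \<ge> 0" unfolding n_def by simp
          hence "C (Suc n)" unfolding C_def using e2 un by simp
          thus False using N[OF nN(1)] by blast
        qed
      next
        case False
        hence "kq (SS g (X n)) \<ge> 0" by (intro kq_nonneg) simp
        hence "fst (X (Suc n)) < 0" using e un by simp
        thus ?thesis unfolding n_def by simp
      qed
    qed
    define Psi where "Psi n = GM g (fst (X n)) (SS g (X n)) - fst (X n) / 2" for n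
    have Pdec: "Psi (Suc n) \<le> Psi n - 1/2" if nm: "n \<ge> m" for n
    proof -
      obtain j where nj: "n = m + j" using le_Suc_ex[OF nm] by blast
      have un: "fst (X n) < 0" using neg[of j] nj by simp
      show ?thesis unfolding Psi_def XS mapM_und[OF un] using psi_und[OF g un nI] .
    qed
    have Pj: "Psi (m + j) \<le> Psi m - real j / 2" for j
    proof (induction j)
      case 0 show ?case by simp
    next
      case (Suc j)
      have "Psi (Suc (m + j)) \<le> Psi (m + j) - 1/2" by (rule Pdec) simp
      thus ?case using Suc.IH by (simp add: field_simps)
    qed
    have Plow: "Psi n \<ge> - Vn 0" if nm: "n \<ge> m" for n
    proof -
      obtain j where nj: "n = m + j" using le_Suc_ex[OF nm] by blast
      have un: "fst (X n) < 0" using neg[of j] nj by simp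
      have "- GM g (fst (X n)) (SS g (X n)) \<le> Vn n" unfolding Vn_def by (rule VV_ge(2))
      moreover have "Vn n \<le> Vn 0" by (rule Vmono2) simp
      ultimately show ?thesis unfolding Psi_def using un by linarith
    qed
    have "\<exists>j. Psi m + Vn 0 < real j * (1/2)" by (rule ex_less_of_nat_mult) simp
    then obtain j where j: "Psi m + Vn 0 < real j * (1/2)" by blast
    have "Psi (m + j) \<ge> - Vn 0" by (rule Plow) simp
    thus False using Pj[of j] j by simp
  qed
qed

theorem theorem1:
  fixes \<gamma> \<rho> :: real
  assumes "\<gamma> \<ge> 1" and "0 \<le> \<rho>" and "\<rho> < 1"
  shows "mapM \<gamma> \<rho> 0 = 0 \<and>
         (\<forall>x0 :: real \<times> real. (\<lambda>n. norm ((mapM \<gamma> \<rho> ^^ n) x0)) \<longlonglongrightarrow> 0)"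
proof
  show "mapM \<gamma> \<rho> 0 = 0" by (simp add: mapM_def mapT_def linA_def zero_prod_def)
  show "\<forall>x0 :: real \<times> real. (\<lambda>n. norm ((mapM \<gamma> \<rho> ^^ n) x0)) \<longlonglongrightarrow> 0"
  proof
    fix x0 :: "real \<times> real"
    obtain N where N: "inI \<gamma> \<rho> (fst ((mapM \<gamma> \<rho> ^^ N) x0)) (SS \<gamma> ((mapM \<gamma> \<rho> ^^ N) x0))"
      using enter_I[OF assms(2,3,1)] by blast
    have "(\<lambda>j. norm ((mapM \<gamma> \<rho> ^^ j) ((mapM \<gamma> \<rho> ^^ N) x0))) \<longlonglongrightarrow> 0"
      by (rule conv_from_I[OF assms(2,3,1) N])
    hence "(\<lambda>j. norm ((mapM \<gamma> \<rho> ^^ (j + N)) x0)) \<longlonglongrightarrow> 0" by (simp add: funpow_add)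
    thus "(\<lambda>n. norm ((mapM \<gamma> \<rho> ^^ n) x0)) \<longlonglongrightarrow> 0" by (rule LIMSEQ_offset)
  qed
qed

end
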